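(* Let $T\in\mathcal{L}(\mathcal{H})$ be a hypo-EP operator. Then $TT^\dagger(T+T^* )=(T+T^* )TT^\dagger$ if and only if $T$ is an EP operator.
   Context: $\mathcal{H}$ is a Hilbert space, $\mathcal{L}(\mathcal{H})$ the bounded operators on it. For $T$ with closed range, $T^\dagger$ is its Moore–Penrose inverse (unique solution of $TT^\dagger T=T$, $T^\dagger TT^\dagger=T^\dagger$, $(T^\dagger T)^*=T^\dagger T$, $(TT^\dagger)^*=TT^\dagger$). $R(\cdot)$ denotes range. $T$ is EP if $T$ has closed range and $R(T)=R(T^* )$. $T$ is hypo-EP if $T$ has closed range and $T^\dagger T-TT^\dagger\ge 0$, equivalently $R(T)\subset R(T^* )$. *)

theory Defs
  imports "HOL-Analysis.Analysis"
begin

text \<open>Hilbert space: a complete real inner product space, type class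
  real_inner + complete_space. Bounded operators: bounded_linear maps.\<close>

definition is_adjoint :: "('a::real_inner \<Rightarrow> 'a) \<Rightarrow> ('a \<Rightarrow> 'a) \<Rightarrow> bool" where
  "is_adjoint T S \<longleftrightarrow> (\<forall>x y. inner (T x) y = inner x (S y))"

definition self_adjoint_op :: "('a::real_inner \<Rightarrow> 'a) \<Rightarrow> bool" where
  "self_adjoint_op A \<longleftrightarrow> is_adjoint A A"

definition is_MP_inverse :: "('a::real_inner \<Rightarrow> 'a) \<Rightarrow> ('a \<Rightarrow> 'a) \<Rightarrow> bool" where
  "is_MP_inverse T X \<longleftrightarrow> bounded_linear X \<and>
     T \<circ> X \<circ> T = T \<and> X \<circ> T \<circ> X = X \<and>
     self_adjoint_op (X \<circ> T) \<and> self_adjoint_op (T \<circ> X)"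

text \<open>EP and hypo-EP, for T with adjoint S.\<close>
definition EP_op :: "('a::real_inner \<Rightarrow> 'a) \<Rightarrow> ('a \<Rightarrow> 'a) \<Rightarrow> bool" where
  "EP_op T S \<longleftrightarrow> closed (range T) \<and> range T = range S"

definition hypo_EP_op :: "('a::real_inner \<Rightarrow> 'a) \<Rightarrow> ('a \<Rightarrow> 'a) \<Rightarrow> bool" where
  "hypo_EP_op T S \<longleftrightarrow> closed (range T) \<and> range T \<subseteq> range S"

end

theory Submission
  imports Defs
begin

lemma inner_ext_eq:
  fixes a b :: "'a::real_inner"
  assumes "\<And>y. inner a y = inner b y"
  shows "a = b"
proof -
  have "inner (a - b) (a - b) = 0"
    using assms[of "a - b"] by (simp add: inner_diff_left)
  then show ?thesis by simp
qed

theorem mainTheorem2: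
  fixes T S X :: "'a::{real_inner, complete_space} \<Rightarrow> 'a"
  assumes "bounded_linear T"
    and "is_adjoint T S"
    and "is_MP_inverse T X"
    and "hypo_EP_op T S"
  shows "(T \<circ> X \<circ> (\<lambda>x. T x + S x) = (\<lambda>x. T x + S x) \<circ> T \<circ> X) \<longleftrightarrow> EP_op T S"
proof -
  have lT: "linear T" using assms(1) bounded_linear.linear by blast
  have bX: "bounded_linear X" and TXT: "T \<circ> X \<circ> T = T"
    and sa: "self_adjoint_op (T \<circ> X)" using assms(3) unfolding is_MP_inverse_def by auto
  have lX: "linear X" using bX bounded_linear.linear by blast
  have adj: "\<And>x y. inner (T x) y = inner x (S y)" using assms(2) unfolding is_adjoint_def by auto
  have saP: "\<And>x y. inner (T (X x)) y = inner x (T (X y))"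
    using sa unfolding self_adjoint_op_def is_adjoint_def by auto
  have PT: "\<And>x. T (X (T x)) = T x" using TXT by (metis comp_apply)
  have PP: "\<And>x. T (X (T (X x))) = T (X x)" using PT by simp
  have SP: "\<And>x. S (T (X x)) = S x"
  proof -
    fix x
    show "S (T (X x)) = S x"
    proof (rule inner_ext_eq)
      fix y
      have "inner (S (T (X x))) y = inner y (S (T (X x)))" by (simp add: inner_commute)
      also have "\<dots> = inner (T y) (T (X x))" by (simp add: adj)
      also have "\<dots> = inner (T (X (T y))) x" using saP by (simp add: inner_commute)
      also have "\<dots> = inner (T y) x" by (simp add: PT)
      also have "\<dots> = inner (S x) y" by (metis adj inner_commute)
      finally show "inner (S (T (X x))) y = inner (S x) y" .
    qed
  qed
  have Plin: "\<And>a b. T (X (a + b)) = T (X a) + T (X b)"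
    using lT lX by (simp add: linear_add)
  show ?thesis
  proof
    assume C: "T \<circ> X \<circ> (\<lambda>x. T x + S x) = (\<lambda>x. T x + S x) \<circ> T \<circ> X"
    have C': "\<And>x. T x + T (X (S x)) = T (T (X x)) + S x"
    proof -
      fix x
      have "T (X (T x + S x)) = T (T (X x)) + S (T (X x))"
        using fun_cong[OF C, of x] by simp
      then show "T x + T (X (S x)) = T (T (X x)) + S x" by (simp add: Plin PT SP)
    qed
    have TP: "\<And>x. T (T (X x)) = T x"
    proof -
      fix x
      have "T (X (T x + T (X (S x)))) = T (X (T (T (X x)) + S x))" using C' by simp
      then have "T x + T (X (S x)) = T (T (X x)) + T (X (S x))"
        by (simp add: Plin PT PP)
      then show "T (T (X x)) = T x" by simp
    qed
    have PS: "\<And>x. T (X (S x)) = S x" using C' TP by (metis add_left_cancel)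
    have "range S \<subseteq> range T"
    proof
      fix z assume "z \<in> range S"
      then obtain x where "z = S x" by auto
      then have "z = T (X (S x))" using PS by simp
      then show "z \<in> range T" by simp
    qed
    then show "EP_op T S" using assms(4) unfolding hypo_EP_op_def EP_op_def by auto
  next
    assume "EP_op T S"
    then have rS: "range S \<subseteq> range T" unfolding EP_op_def by auto
    have PS: "\<And>x. T (X (S x)) = S x"
    proof -
      fix x
      have "S x \<in> range T" using rS by auto
      then obtain z where "S x = T z" by auto
      then show "T (X (S x)) = S x" by (simp add: PT)
    qed
    have TP: "\<And>x. T (T (X x)) = T x"
    proof -
      fix x
      show "T (T (X x)) = T x"
      proof (rule inner_ext_eq)
        fix y
        have "inner (T (T (X x))) y = inner (T (X x)) (S y)" by (simp add: adj)
        also have "\<dots> = inner x (T (X (S y)))" by (simp add: saP)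
        also have "\<dots> = inner x (S y)" by (simp add: PS)
        also have "\<dots> = inner (T x) y" by (simp add: adj)
        finally show "inner (T (T (X x))) y = inner (T x) y" .
      qed
    qed
    show "T \<circ> X \<circ> (\<lambda>x. T x + S x) = (\<lambda>x. T x + S x) \<circ> T \<circ> X"
      by (rule ext) (simp add: Plin PT PS TP SP)
  qed
qed

end
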